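(* Let $N\ge 4$, let $l,r$ be positive integers with $2\le l+r\le N-2$, let $\hat O\in V_{\mathcal N}$ be $(l,r)$-invertible, let $\hat X_i\in V_{\{i\}}$ ($i=1,\dots,N$), and let $\hat Y_k$ ($k=N-r,\dots,l$) be defined by $\hat Y_{N-r}=\hat X_{N-r+1}\cdots\hat X_N$ and $\hat Y_{k-1}=\bar E_{\{k-l,\dots,k-1\}}^{\{k,\dots,k+r-1\}}\bigl(E_{\{k-l,\dots,k-1\}}^{\{k,\dots,k+r\}}(\hat X_k\hat Y_k)\bigr)$ for $k=N-r,\dots,l+1$ (bar = Moore–Penrose pseudoinverse). Then for every $k=l+1,\dots,N-r$, $$E_{\{1,\dots,k-1\}}^{\{k,\dots,k+r-1\}}(\hat Y_{k-1})=E_{\{1,\dots,k-1\}}^{\{k,\dots,k+r\}}(\hat X_k\hat Y_k).$$ Moreover, for such $k$ the linear map $\phi$ from $\mathrm{ran}\bigl[E_{\{1,\dots,k-1\}}^{\{k,\dots,k+r\}}\bigr]$ to $V_{\{k-l,\dots,k-1\}}$ given by the partial trace $\mathrm{tr}_{\{1,\dots,k-l-1\}}$ is injective.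
   Context: Sites $\mathcal N=\{1,\dots,N\}$, each with Hilbert space $\mathbb C^d$. For each site $i$, $\{\hat P_i^{(\alpha)}\}_{\alpha=1,\dots,d^2}$ is a Hilbert–Schmidt-orthonormal operator basis on site $i$. For $\mathcal I\subset\mathcal N$, $V_{\mathcal I}$ is the complex span of the products $\prod_{i\in\mathcal I}\hat P_i^{(\alpha_i)}$, with Hilbert–Schmidt inner product; operators in $V_{\mathcal I}$ are identified with their tensor product with the identity on the other sites. $\mathrm{tr}_{\mathcal S}$ is the partial trace over sites in $\mathcal S$. For fixed $\hat O\in V_{\mathcal N}$ and disjoint $\mathcal I,\mathcal J\subset\mathcal N$ with $\mathcal I\cup\mathcal J$ contiguous, $E_{\mathcal I}^{\mathcal J}:V_{\mathcal J}\to V_{\mathcal I}$, $E_{\mathcal I}^{\mathcal J}(\hat X)=\mathrm{tr}_{\mathcal N\setminus\mathcal I}[\hat X\hat O]$. Definition ($(l,r)$-invertibility): $\hat O$ is $(l,r)$-invertible if for all integers $k$ with $l\le k\le N-r-1$, $\mathrm{rank}\bigl[E_{\{k-l+1,\dots,k\}}^{\{k+1,\dots,k+r\}}\bigr]=\mathrm{rank}\bigl[E_{\{1,\dots,k\}}^{\{k+1,\dots,N\}}\bigr]$. *)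

theory Defs
  imports Complex_Main "HOL-Library.Function_Algebras"
begin

text \<open>Sites are 1..N, local dimension d. A basis state (configuration) of a set S of sites
is a function c :: nat => nat with c i < d for i in S and c i = 0 outside S.
An operator on the full Hilbert space is represented by its matrix entries
X s t (s, t configurations of {1..N}); entries at non-configurations are 0.\<close>

type_synonym op = "(nat \<Rightarrow> nat) \<Rightarrow> (nat \<Rightarrow> nat) \<Rightarrow> complex"

definition cfg :: "nat \<Rightarrow> nat set \<Rightarrow> (nat \<Rightarrow> nat) set" where
  "cfg d S = {c. \<forall>i. (i \<in> S \<longrightarrow> c i < d) \<and> (i \<notin> S \<longrightarrow> c i = 0)}"

definition restr :: "nat set \<Rightarrow> (nat \<Rightarrow> nat) \<Rightarrow> (nat \<Rightarrow> nat)" where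
  "restr I s = (\<lambda>i. if i \<in> I then s i else 0)"

definition merge :: "nat set \<Rightarrow> (nat \<Rightarrow> nat) \<Rightarrow> (nat \<Rightarrow> nat) \<Rightarrow> (nat \<Rightarrow> nat)" where
  "merge S c a = (\<lambda>i. if i \<in> S then c i else a i)"

text \<open>embed d N I A is the operator A (on the sites I) tensored with the identity on the other sites.\<close>
definition embed :: "nat \<Rightarrow> nat \<Rightarrow> nat set \<Rightarrow> op \<Rightarrow> op" where
  "embed d N I A = (\<lambda>s t. if s \<in> cfg d {1..N} \<and> t \<in> cfg d {1..N} \<and> (\<forall>i\<in>{1..N} - I. s i = t i)
                          then A (restr I s) (restr I t) else 0)"

text \<open>V_I: operators supported on the sites I (identified with their tensor product with the identity).\<close>
definition Vsp :: "nat \<Rightarrow> nat \<Rightarrow> nat set \<Rightarrow> op set" where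
  "Vsp d N I = range (embed d N I)"

definition opid :: "nat \<Rightarrow> nat \<Rightarrow> op" where
  "opid d N = embed d N {} (\<lambda>_ _. 1)"

definition opmult :: "nat \<Rightarrow> nat \<Rightarrow> op \<Rightarrow> op \<Rightarrow> op" where
  "opmult d N X Y = (\<lambda>s t. \<Sum>u\<in>cfg d {1..N}. X s u * Y u t)"

text \<open>Partial trace over the sites S; the result acts on {1..N} - S (identity-extended).\<close>
definition ptr :: "nat \<Rightarrow> nat \<Rightarrow> nat set \<Rightarrow> op \<Rightarrow> op" where
  "ptr d N S Z = embed d N ({1..N} - S)
     (\<lambda>a b. \<Sum>c\<in>cfg d S. Z (merge S c a) (merge S c b))"

text \<open>E_I^J(X) = tr_{N\I}[X O]; the domain V_J only enters through rank / pseudoinverse.\<close>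
definition Emap :: "nat \<Rightarrow> nat \<Rightarrow> op \<Rightarrow> nat set \<Rightarrow> op \<Rightarrow> op" where
  "Emap d N Ob I X = ptr d N ({1..N} - I) (opmult d N X Ob)"

definition cscale :: "complex \<Rightarrow> op \<Rightarrow> op" where
  "cscale c X = (\<lambda>s t. c * X s t)"

definition Erank :: "nat \<Rightarrow> nat \<Rightarrow> op \<Rightarrow> nat set \<Rightarrow> nat set \<Rightarrow> nat" where
  "Erank d N Ob I J = vector_space.dim cscale (Emap d N Ob I ` Vsp d N J)"

definition hs_inner :: "nat \<Rightarrow> nat \<Rightarrow> op \<Rightarrow> op \<Rightarrow> complex" where
  "hs_inner d N A B = (\<Sum>s\<in>cfg d {1..N}. \<Sum>t\<in>cfg d {1..N}. cnj (A s t) * B s t)"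

text \<open>Moore-Penrose pseudoinverse of E_I^J : V_J -> V_I applied to y: the unique x in V_J,
orthogonal to the kernel, such that E x - y is orthogonal to the range of E.\<close>
definition Epinv :: "nat \<Rightarrow> nat \<Rightarrow> op \<Rightarrow> nat set \<Rightarrow> nat set \<Rightarrow> op \<Rightarrow> op" where
  "Epinv d N Ob I J y = (THE x. x \<in> Vsp d N J
      \<and> (\<forall>z\<in>Vsp d N J. Emap d N Ob I z = 0 \<longrightarrow> hs_inner d N z x = 0)
      \<and> (\<forall>z\<in>Vsp d N J. hs_inner d N (Emap d N Ob I z) (Emap d N Ob I x - y) = 0))"

definition lr_invertible :: "nat \<Rightarrow> nat \<Rightarrow> op \<Rightarrow> nat \<Rightarrow> nat \<Rightarrow> bool" where
  "lr_invertible d N Ob l r = (\<forall>k. l \<le> k \<and> k + r + 1 \<le> N \<longrightarrow>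
      Erank d N Ob {k-l+1..k} {k+1..k+r} = Erank d N Ob {1..k} {k+1..N})"

end

theory Submission
  imports Defs
begin



lemma finite_cfg: "finite S \<Longrightarrow> finite (cfg d S)"
proof -
  assume "finite S"
  have "cfg d S = {f. \<forall>x. (x \<in> S \<longrightarrow> f x \<in> {..<d}) \<and> (x \<notin> S \<longrightarrow> f x = 0)}"
    by (auto simp: cfg_def)
  then show ?thesis using finite_set_of_finite_funs[of S "{..<d}" 0] \<open>finite S\<close> by simp
qed

lemma op_sum_apply: "(\<Sum>p\<in>A. (f p :: op)) s t = (\<Sum>p\<in>A. f p s t)"
  by (induction A rule: infinite_finite_induct) auto

interpretation V: vector_space cscale
  by unfold_locales (auto simp: cscale_def fun_eq_iff algebra_simps)

lemma embed_eq: "embed d N I A s t = (if s \<in> cfg d {1..N} \<and> t \<in> cfg d {1..N} \<and> (\<forall>i\<in>{1..N} - I. s i = t i)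
                          then A (restr I s) (restr I t) else 0)"
  by (simp add: embed_def)

lemma restr_cfg: "s \<in> cfg d U \<Longrightarrow> I \<subseteq> U \<Longrightarrow> 0 < d \<Longrightarrow> restr I s \<in> cfg d U"
  by (auto simp: cfg_def restr_def)

lemma restr_restr[simp]: "restr I (restr J s) = restr (I \<inter> J) s"
  by (auto simp: restr_def fun_eq_iff)

lemma Vsp_char:
  assumes "0 < d" "I \<subseteq> {1..N}"
  shows "X \<in> Vsp d N I \<longleftrightarrow> embed d N I X = X"
proof
  assume "X \<in> Vsp d N I"
  then obtain A where X: "X = embed d N I A" by (auto simp: Vsp_def)
  show "embed d N I X = X"
  proof (rule ext, rule ext)
    fix s t
    show "embed d N I X s t = X s t"
      using assms unfolding X embed_eq
      by (auto simp: restr_cfg) (auto simp: restr_def)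
  qed
next
  assume "embed d N I X = X" then show "X \<in> Vsp d N I" unfolding Vsp_def by (metis rangeI)
qed

lemma Vsp_eq:
  assumes "0 < d" "I \<subseteq> {1..N}" "X \<in> Vsp d N I"
  shows "X s t = (if s \<in> cfg d {1..N} \<and> t \<in> cfg d {1..N} \<and> (\<forall>i\<in>{1..N} - I. s i = t i)
                          then X (restr I s) (restr I t) else 0)"
proof -
  have e: "embed d N I X = X" using Vsp_char[OF assms(1,2)] assms(3) by simp
  have "X s t = embed d N I X s t" using e by simp
  also have "\<dots> = (if s \<in> cfg d {1..N} \<and> t \<in> cfg d {1..N} \<and> (\<forall>i\<in>{1..N} - I. s i = t i)
                          then X (restr I s) (restr I t) else 0)" by (rule embed_eq)
  finally show ?thesis .
qed

lemma Vsp_mono: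
  assumes "0 < d" "J \<subseteq> {1..N}" "I \<subseteq> J" "X \<in> Vsp d N I"
  shows "X \<in> Vsp d N J"
proof -
  have I: "I \<subseteq> {1..N}" using assms by auto
  have "embed d N J X = X"
  proof (rule ext, rule ext)
    fix s t
    show "embed d N J X s t = X s t"
    proof -
      have c: "((\<forall>i\<in>{1..N} - J. s i = t i) \<and> (\<forall>i\<in>{1..N} - I. restr J s i = restr J t i))
               = (\<forall>i\<in>{1..N} - I. s i = t i)"
        using assms(3) by (auto simp: restr_def)
      show ?thesis
      apply (subst Vsp_eq[OF assms(1) I assms(4), of s t])
      apply (subst embed_eq)
      apply (subst Vsp_eq[OF assms(1) I assms(4)])
        using assms(1,2,3) c by (auto simp: restr_cfg Int_absorb2)
    qed
  qed
  then show ?thesis using Vsp_char[OF assms(1,2)] by simp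
qed




lemma merge_cfg: "v \<in> cfg d K \<Longrightarrow> a \<in> cfg d U \<Longrightarrow> K \<subseteq> U \<Longrightarrow> merge K v a \<in> cfg d U"
  by (auto simp: cfg_def merge_def)

lemma sum_red:
  assumes "a \<in> cfg d U" "K \<subseteq> U" "finite U"
    and "\<And>u. u \<in> cfg d U \<Longrightarrow> \<not>(\<forall>i\<in>U-K. u i = a i) \<Longrightarrow> f u = 0"
  shows "(\<Sum>u\<in>cfg d U. f u) = (\<Sum>v\<in>cfg d K. f (merge K v a))"
proof -
  let ?A = "{u\<in>cfg d U. \<forall>i\<in>U-K. u i = a i}"
  have "(\<Sum>u\<in>cfg d U. f u) = (\<Sum>u\<in>?A. f u)"
    by (rule sum.mono_neutral_right) (auto simp: finite_cfg assms)
  also have "?A = (\<lambda>v. merge K v a) ` cfg d K"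
  proof
    show "(\<lambda>v. merge K v a) ` cfg d K \<subseteq> ?A" using merge_cfg[OF _ assms(1,2)] by (auto simp: merge_def)
    show "?A \<subseteq> (\<lambda>v. merge K v a) ` cfg d K"
    proof
      fix u assume u: "u \<in> ?A"
      have "u = merge K (restr K u) a"
      proof (rule ext)
        fix x show "u x = merge K (restr K u) a x"
          using u assms(1,2) by (cases "x \<in> U") (auto simp: merge_def restr_def cfg_def)
      qed
      moreover have "restr K u \<in> cfg d K" using u assms by (auto simp: cfg_def restr_def)
      ultimately show "u \<in> (\<lambda>v. merge K v a) ` cfg d K" by blast
    qed
  qed
  also have "(\<Sum>u\<in>(\<lambda>v. merge K v a) ` cfg d K. f u) = (\<Sum>v\<in>cfg d K. f (merge K v a))"
  proof (rule sum.reindex_cong[where l="\<lambda>v. merge K v a"])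
    show "inj_on (\<lambda>v. merge K v a) (cfg d K)"
    proof (rule inj_onI)
      fix v w assume "v \<in> cfg d K" "w \<in> cfg d K" "merge K v a = merge K w a"
      then show "v = w" by (auto simp: fun_eq_iff merge_def cfg_def) (metis)
    qed
  qed auto
  finally show ?thesis .
qed

lemma restr_merge: "v \<in> cfg d K \<Longrightarrow> restr K (merge K v a) = v"
  by (auto simp: fun_eq_iff restr_def merge_def cfg_def)

lemma Vsp_mult:
  assumes "0 < d" "K \<subseteq> {1..N}" "X \<in> Vsp d N K" "Y \<in> Vsp d N K"
  shows "opmult d N X Y \<in> Vsp d N K"
proof -
  let ?C = "cfg d {1..N}"
  have key: "opmult d N X Y a b = (\<Sum>v\<in>cfg d K. X (restr K a) v * Y v (restr K b))"
    if a: "a \<in> ?C" "b \<in> ?C" "\<forall>i\<in>{1..N}-K. a i = b i" for a b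
  proof -
    have "opmult d N X Y a b = (\<Sum>v\<in>cfg d K. X a (merge K v a) * Y (merge K v a) b)"
      unfolding opmult_def
    proof (rule sum_red[OF a(1) assms(2)])
      fix u assume "u \<in> ?C" "\<not>(\<forall>i\<in>{1..N}-K. u i = a i)"
      then show "X a u * Y u b = 0" using Vsp_eq[OF assms(1,2,3), of a u] by auto
    qed simp
    also have "\<dots> = (\<Sum>v\<in>cfg d K. X (restr K a) v * Y v (restr K b))"
    proof (rule sum.cong[OF refl])
      fix v assume v: "v \<in> cfg d K"
      have m: "merge K v a \<in> ?C" using merge_cfg[OF v a(1) assms(2)] .
      have "X a (merge K v a) = X (restr K a) v"
        using Vsp_eq[OF assms(1,2,3), of a "merge K v a"] m a restr_merge[OF v]
        by (auto simp: merge_def)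
      moreover have "Y (merge K v a) b = Y v (restr K b)"
        using Vsp_eq[OF assms(1,2,4), of "merge K v a" b] m a restr_merge[OF v]
        by (auto simp: merge_def)
      ultimately show "X a (merge K v a) * Y (merge K v a) b = X (restr K a) v * Y v (restr K b)" by simp
    qed
    finally show ?thesis .
  qed
  have "embed d N K (opmult d N X Y) = opmult d N X Y"
  proof (rule ext, rule ext)
    fix s t
    show "embed d N K (opmult d N X Y) s t = opmult d N X Y s t"
    proof (cases "s \<in> ?C \<and> t \<in> ?C \<and> (\<forall>i\<in>{1..N} - K. s i = t i)")
      case True
      have r: "restr K s \<in> ?C" "restr K t \<in> ?C" using True restr_cfg assms(1,2) by auto
      have r3: "\<forall>i\<in>{1..N}-K. restr K s i = restr K t i" by (simp add: restr_def)
      have "opmult d N X Y (restr K s) (restr K t) = opmult d N X Y s t"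
        using key[of s t] key[OF r r3] True by simp
      then show ?thesis using True by (simp add: embed_eq)
    next
      case False
      have "opmult d N X Y s t = 0" unfolding opmult_def
      proof (rule sum.neutral, rule ballI)
        fix u assume "u \<in> ?C"
        show "X s u * Y u t = 0"
          using Vsp_eq[OF assms(1,2,3), of s u] Vsp_eq[OF assms(1,2,4), of u t] False by auto
      qed
      then show ?thesis using False by (auto simp: embed_eq)
    qed
  qed
  then show ?thesis using Vsp_char[OF assms(1,2)] by simp
qed

lemma merge_restr_cfg: "s \<in> cfg d U \<Longrightarrow> merge S c (restr (U - S) s) = merge S c s"
  by (auto simp: fun_eq_iff merge_def restr_def cfg_def)

lemma ptr_eq:
  assumes "S \<subseteq> {1..N}"
  shows "ptr d N S Z s t = (if s \<in> cfg d {1..N} \<and> t \<in> cfg d {1..N} \<and> (\<forall>i\<in>S. s i = t i)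
     then (\<Sum>c\<in>cfg d S. Z (merge S c s) (merge S c t)) else 0)"
proof -
  have e: "{1..N} - ({1..N} - S) = S" using assms by auto
  show ?thesis unfolding ptr_def embed_eq e by (auto simp: merge_restr_cfg)
qed

lemma sum_cfg_split:
  assumes "S1 \<inter> S2 = {}"
  shows "(\<Sum>c\<in>cfg d (S1 \<union> S2). g c) = (\<Sum>c2\<in>cfg d S2. \<Sum>c1\<in>cfg d S1. g (merge S1 c1 c2))"
proof -
  have "(\<Sum>c\<in>cfg d (S1 \<union> S2). g c) = (\<Sum>p\<in>cfg d S2 \<times> cfg d S1. g (merge S1 (snd p) (fst p)))"
  proof (rule sum.reindex_cong[where l="\<lambda>p. merge S1 (snd p) (fst p)"])
    show "inj_on (\<lambda>p. merge S1 (snd p) (fst p)) (cfg d S2 \<times> cfg d S1)"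
    proof (rule inj_onI, clarsimp)
      fix a b a' b' assume h: "a \<in> cfg d S2" "b \<in> cfg d S1" "a' \<in> cfg d S2" "b' \<in> cfg d S1"
        "merge S1 b a = merge S1 b' a'"
      have "b i = b' i \<and> a i = a' i" for i
      proof -
        have hi: "(if i\<in>S1 then b i else a i) = (if i \<in> S1 then b' i else a' i)"
          using fun_cong[OF h(5), of i] by (simp add: merge_def)
        show ?thesis
        proof (cases "i \<in> S1")
          case True
          then have "i \<notin> S2" using assms by blast
          then show ?thesis using hi True h(1-4) by (simp add: cfg_def)
        next
          case False then show ?thesis using hi h(1-4) by (simp add: cfg_def)
        qed
      qed
      then show "a = a' \<and> b = b'" by auto
    qed
    show "cfg d (S1 \<union> S2) = (\<lambda>p. merge S1 (snd p) (fst p)) ` (cfg d S2 \<times> cfg d S1)"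
    proof
      show "(\<lambda>p. merge S1 (snd p) (fst p)) ` (cfg d S2 \<times> cfg d S1) \<subseteq> cfg d (S1 \<union> S2)"
        by (auto simp: cfg_def merge_def)
      show "cfg d (S1 \<union> S2) \<subseteq> (\<lambda>p. merge S1 (snd p) (fst p)) ` (cfg d S2 \<times> cfg d S1)"
      proof
        fix c assume c: "c \<in> cfg d (S1 \<union> S2)"
        have "c = merge S1 (restr S1 c) (restr S2 c)" using c by (auto simp: fun_eq_iff merge_def restr_def cfg_def)
        moreover have "(restr S2 c, restr S1 c) \<in> cfg d S2 \<times> cfg d S1" using c by (auto simp: cfg_def restr_def)
        ultimately show "c \<in> (\<lambda>p. merge S1 (snd p) (fst p)) ` (cfg d S2 \<times> cfg d S1)"
          by (metis (no_types, lifting) fst_conv image_eqI snd_conv)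
      qed
    qed
  qed auto
  also have "\<dots> = (\<Sum>c2\<in>cfg d S2. \<Sum>c1\<in>cfg d S1. g (merge S1 c1 c2))"
    by (simp add: sum.cartesian_product case_prod_beta)
  finally show ?thesis .
qed

lemma ptr_eqT:
  assumes "S \<subseteq> {1..N}" "s \<in> cfg d {1..N}" "t \<in> cfg d {1..N}" "\<forall>i\<in>S. s i = t i"
  shows "ptr d N S Z s t = (\<Sum>c\<in>cfg d S. Z (merge S c s) (merge S c t))"
  using ptr_eq[OF assms(1), of d Z s t] assms(2-4) by argo

lemma ptr_eqF:
  assumes "S \<subseteq> {1..N}" "\<not> (s \<in> cfg d {1..N} \<and> t \<in> cfg d {1..N} \<and> (\<forall>i\<in>S. s i = t i))"
  shows "ptr d N S Z s t = 0"
  using ptr_eq[OF assms(1), of d Z s t] assms(2) by argo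

lemma ptr_comp:
  assumes "S1 \<inter> S2 = {}" "S1 \<subseteq> {1..N}" "S2 \<subseteq> {1..N}"
  shows "ptr d N (S1 \<union> S2) Z = ptr d N S2 (ptr d N S1 Z)"
proof (rule ext, rule ext)
  fix s t
  let ?C = "cfg d {1..N}"
  have U: "S1 \<union> S2 \<subseteq> {1..N}" using assms by auto
  have mm: "merge (S1 \<union> S2) (merge S1 c1 c2) s = merge S1 c1 (merge S2 c2 s)" for c1 c2 s
    by (auto simp: fun_eq_iff merge_def)
  have ag: "(\<forall>i\<in>S1. merge S2 c2 s i = merge S2 c2 t i) = (\<forall>i\<in>S1. s i = t i)" for c2
    using assms(1) by (auto simp: merge_def)
  have mc: "c2 \<in> cfg d S2 \<Longrightarrow> x \<in> ?C \<Longrightarrow> merge S2 c2 x \<in> ?C" for c2 x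
    using merge_cfg assms(3) by blast
  show "ptr d N (S1 \<union> S2) Z s t = ptr d N S2 (ptr d N S1 Z) s t"
  proof (cases "s \<in> ?C \<and> t \<in> ?C \<and> (\<forall>i\<in>S2. s i = t i)")
    case True
    then have sC: "s \<in> ?C" and tC: "t \<in> ?C" and a2: "\<forall>i\<in>S2. s i = t i" by auto
    have R: "ptr d N S2 (ptr d N S1 Z) s t = (\<Sum>c2\<in>cfg d S2. ptr d N S1 Z (merge S2 c2 s) (merge S2 c2 t))"
      by (rule ptr_eqT[OF assms(3) sC tC a2])
    show ?thesis
    proof (cases "\<forall>i\<in>S1. s i = t i")
      case True
      have "ptr d N S1 Z (merge S2 c2 s) (merge S2 c2 t) =
            (\<Sum>c1\<in>cfg d S1. Z (merge S1 c1 (merge S2 c2 s)) (merge S1 c1 (merge S2 c2 t)))"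
        if c2: "c2 \<in> cfg d S2" for c2
        by (rule ptr_eqT[OF assms(2) mc[OF c2 sC] mc[OF c2 tC]]) (use True ag in blast)
      then have R2: "ptr d N S2 (ptr d N S1 Z) s t =
        (\<Sum>c2\<in>cfg d S2. \<Sum>c1\<in>cfg d S1. Z (merge S1 c1 (merge S2 c2 s)) (merge S1 c1 (merge S2 c2 t)))"
        unfolding R by (rule sum.cong[OF refl])
      have a12: "\<forall>i\<in>S1 \<union> S2. s i = t i" using True a2 by blast
      have "ptr d N (S1 \<union> S2) Z s t =
        (\<Sum>c2\<in>cfg d S2. \<Sum>c1\<in>cfg d S1. Z (merge S1 c1 (merge S2 c2 s)) (merge S1 c1 (merge S2 c2 t)))"
        unfolding ptr_eqT[OF U sC tC a12] sum_cfg_split[OF assms(1)] mm ..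
      then show ?thesis using R2 by simp
    next
      case False
      have "ptr d N S1 Z (merge S2 c2 s) (merge S2 c2 t) = 0" for c2
        by (rule ptr_eqF[OF assms(2)]) (use False ag in blast)
      then have "ptr d N S2 (ptr d N S1 Z) s t = 0" unfolding R by simp
      moreover have "ptr d N (S1 \<union> S2) Z s t = 0"
        by (rule ptr_eqF[OF U]) (use False in blast)
      ultimately show ?thesis by simp
    qed
  next
    case False
    have "ptr d N (S1 \<union> S2) Z s t = 0"
      by (rule ptr_eqF[OF U]) (use False in blast)
    moreover have "ptr d N S2 (ptr d N S1 Z) s t = 0"
      by (rule ptr_eqF[OF assms(3)]) (use False in blast)
    ultimately show ?thesis by simp
  qed
qed

lemma Emap_comp:
  assumes "I' \<subseteq> I" "I \<subseteq> {1..N}"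
  shows "Emap d N Ob I' X = ptr d N (I - I') (Emap d N Ob I X)"
proof -
  have e: "{1..N} - I' = ({1..N} - I) \<union> (I - I')" using assms by auto
  show ?thesis unfolding Emap_def e
    by (rule ptr_comp) (use assms in auto)
qed




definition supp :: "nat \<Rightarrow> nat \<Rightarrow> op \<Rightarrow> bool" where
  "supp d N X \<longleftrightarrow> (\<forall>s t. X s t \<noteq> 0 \<longrightarrow> s \<in> cfg d {1..N} \<and> t \<in> cfg d {1..N})"

lemma supp_embed: "supp d N (embed d N I A)"
  by (simp add: supp_def embed_def)

lemma supp_Vsp: "X \<in> Vsp d N I \<Longrightarrow> supp d N X"
  by (auto simp: Vsp_def supp_embed)

lemma supp_ptr: "supp d N (ptr d N S Z)"
  by (simp add: ptr_def supp_embed)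

lemma supp_Emap: "supp d N (Emap d N Ob I X)"
  by (simp add: Emap_def supp_ptr)

lemma supp_diff: "supp d N A \<Longrightarrow> supp d N B \<Longrightarrow> supp d N (A - B)"
  unfolding supp_def
proof (intro allI impI)
  fix s t assume A: "\<forall>s t. A s t \<noteq> 0 \<longrightarrow> s \<in> cfg d {1..N} \<and> t \<in> cfg d {1..N}"
    and B: "\<forall>s t. B s t \<noteq> 0 \<longrightarrow> s \<in> cfg d {1..N} \<and> t \<in> cfg d {1..N}"
    and "(A - B) s t \<noteq> 0"
  then have "A s t \<noteq> 0 \<or> B s t \<noteq> 0" by auto
  then show "s \<in> cfg d {1..N} \<and> t \<in> cfg d {1..N}" using A B by blast
qed

definition delta :: "(nat \<Rightarrow> nat) \<Rightarrow> (nat \<Rightarrow> nat) \<Rightarrow> op" where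
  "delta a b = (\<lambda>s t. if s = a \<and> t = b then 1 else 0)"

definition Dset :: "nat \<Rightarrow> nat \<Rightarrow> op set" where
  "Dset d N = (\<lambda>p. delta (fst p) (snd p)) ` (cfg d {1..N} \<times> cfg d {1..N})"

lemma finite_Dset: "finite (Dset d N)"
  by (simp add: Dset_def finite_cfg)

lemma supp_span: "supp d N X \<Longrightarrow> X \<in> V.span (Dset d N)"
proof -
  assume X: "supp d N X"
  let ?C = "cfg d {1..N}"
  have eq: "X = (\<Sum>p\<in>?C \<times> ?C. cscale (X (fst p) (snd p)) (delta (fst p) (snd p)))"
  proof (rule ext, rule ext)
    fix s t
    have "(\<Sum>p\<in>?C \<times> ?C. cscale (X (fst p) (snd p)) (delta (fst p) (snd p))) s t
        = (\<Sum>p\<in>?C \<times> ?C. if p = (s, t) then X s t else 0)"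
      unfolding op_sum_apply by (rule sum.cong) (auto simp: cscale_def delta_def)
    also have "\<dots> = X s t"
      using X by (auto simp: supp_def finite_cfg)
    finally show "X s t = (\<Sum>p\<in>?C \<times> ?C. cscale (X (fst p) (snd p)) (delta (fst p) (snd p))) s t" by simp
  qed
  show ?thesis
    by (subst eq, rule V.span_sum, rule V.span_scale, rule V.span_base) (auto simp: Dset_def)
qed

lemma embed_add: "embed d N I (A + B) = embed d N I A + embed d N I B"
  by (auto simp: embed_def fun_eq_iff)
lemma embed_scale: "embed d N I (cscale c A) = cscale c (embed d N I A)"
  by (auto simp: embed_def fun_eq_iff cscale_def)
lemma embed_zero: "embed d N I 0 = 0"
  by (auto simp: embed_def fun_eq_iff)

lemma ptr_add: "ptr d N S (A + B) = ptr d N S A + ptr d N S B"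
proof -
  have "(\<lambda>a b. \<Sum>c\<in>cfg d S. (A + B) (merge S c a) (merge S c b)) =
        (\<lambda>a b. \<Sum>c\<in>cfg d S. A (merge S c a) (merge S c b)) + (\<lambda>a b. \<Sum>c\<in>cfg d S. B (merge S c a) (merge S c b))"
    by (simp add: fun_eq_iff sum.distrib)
  then show ?thesis unfolding ptr_def by (simp add: embed_add)
qed

lemma ptr_scale: "ptr d N S (cscale c A) = cscale c (ptr d N S A)"
proof -
  have "(\<lambda>a b. \<Sum>x\<in>cfg d S. cscale c A (merge S x a) (merge S x b)) =
        cscale c (\<lambda>a b. \<Sum>x\<in>cfg d S. A (merge S x a) (merge S x b))"
    by (simp add: fun_eq_iff sum_distrib_left cscale_def)
  then show ?thesis unfolding ptr_def by (simp add: embed_scale)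
qed

lemma opmult_add: "opmult d N (A + B) Y = opmult d N A Y + opmult d N B Y"
  by (simp add: opmult_def fun_eq_iff sum.distrib distrib_right)

lemma opmult_scale: "opmult d N (cscale c A) Y = cscale c (opmult d N A Y)"
  by (simp add: opmult_def fun_eq_iff sum_distrib_left cscale_def mult.assoc)

lemma Emap_add: "Emap d N Ob I (A + B) = Emap d N Ob I A + Emap d N Ob I B"
  by (simp add: Emap_def opmult_add ptr_add)

lemma Emap_scale: "Emap d N Ob I (cscale c A) = cscale c (Emap d N Ob I A)"
  by (simp add: Emap_def opmult_scale ptr_scale)

lemma vs: "vector_space cscale"
  by unfold_locales (auto simp: cscale_def fun_eq_iff algebra_simps)

lemma linear_ptr: "Vector_Spaces.linear cscale cscale (ptr d N S)"
  by (rule iffD2[OF Vector_Spaces.linear_iff]) (simp add: vs ptr_add ptr_scale)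

lemma linear_Emap: "Vector_Spaces.linear cscale cscale (Emap d N Ob I)"
  by (rule iffD2[OF Vector_Spaces.linear_iff]) (simp add: vs Emap_add Emap_scale)

lemma Emap_diff: "Emap d N Ob I (A - B) = Emap d N Ob I A - Emap d N Ob I B"
proof -
  have "Emap d N Ob I A = Emap d N Ob I (A - B) + Emap d N Ob I B"
    using Emap_add[of d N Ob I "A - B" B] by simp
  then show ?thesis by (simp add: eq_diff_eq)
qed

lemma Vsp_subspace: "V.subspace (Vsp d N I)"
proof -
  have 0: "0 \<in> Vsp d N I" unfolding Vsp_def by (metis embed_zero rangeI)
  have a: "x + y \<in> Vsp d N I" if hx: "x \<in> Vsp d N I" and hy: "y \<in> Vsp d N I" for x y
  proof -
    obtain A B where "x = embed d N I A" "y = embed d N I B" using hx hy unfolding Vsp_def by blast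
    then show ?thesis unfolding Vsp_def by (metis embed_add rangeI)
  qed
  have s: "cscale c x \<in> Vsp d N I" if hx: "x \<in> Vsp d N I" for x c
  proof -
    obtain A where "x = embed d N I A" using hx unfolding Vsp_def by blast
    then show ?thesis unfolding Vsp_def by (metis embed_scale rangeI)
  qed
  show ?thesis unfolding V.subspace_def using 0 a s by blast
qed




lemma hs_add2: "hs_inner d N A (B1 + B2) = hs_inner d N A B1 + hs_inner d N A B2"
  by (simp add: hs_inner_def sum.distrib distrib_left)
lemma hs_diff2: "hs_inner d N A (B1 - B2) = hs_inner d N A B1 - hs_inner d N A B2"
  by (simp add: hs_inner_def sum_subtractf right_diff_distrib)
lemma hs_scale2: "hs_inner d N A (cscale c B) = c * hs_inner d N A B"
  by (simp add: hs_inner_def sum_distrib_left cscale_def algebra_simps)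
lemma hs_add1: "hs_inner d N (A1 + A2) B = hs_inner d N A1 B + hs_inner d N A2 B"
  by (simp add: hs_inner_def sum.distrib distrib_right)
lemma hs_scale1: "hs_inner d N (cscale c A) B = cnj c * hs_inner d N A B"
  by (simp add: hs_inner_def sum_distrib_left cscale_def algebra_simps)
lemma hs_zero1: "hs_inner d N 0 B = 0"
  by (simp add: hs_inner_def)
lemma hs_zero2: "hs_inner d N A 0 = 0"
  by (simp add: hs_inner_def)

lemma hs_self_zero:
  assumes "hs_inner d N A A = 0" "s \<in> cfg d {1..N}" "t \<in> cfg d {1..N}"
  shows "A s t = 0"
proof -
  let ?C = "cfg d {1..N}"
  have "hs_inner d N A A = of_real (\<Sum>s\<in>?C. \<Sum>t\<in>?C. (cmod (A s t))^2)"
    unfolding hs_inner_def of_real_sum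
    by (rule sum.cong[OF refl], rule sum.cong[OF refl]) (metis complex_norm_square mult.commute)
  then have 0: "(\<Sum>s\<in>?C. \<Sum>t\<in>?C. (cmod (A s t))^2) = 0" using assms(1) by (metis of_real_eq_0_iff)
  have "(\<Sum>t\<in>?C. (cmod (A s t))^2) = 0"
    using 0 assms(2) by (subst (asm) sum_nonneg_eq_0_iff) (auto simp: finite_cfg intro: sum_nonneg)
  then have "(cmod (A s t))^2 = 0"
    using assms(3) by (subst (asm) sum_nonneg_eq_0_iff) (auto simp: finite_cfg)
  then show ?thesis by simp
qed

lemma hs_self_zero_inner:
  assumes "hs_inner d N A A = 0"
  shows "hs_inner d N A B = 0"
  unfolding hs_inner_def using hs_self_zero[OF assms] by (auto intro!: sum.neutral)

lemma hs_self_zero_supp: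
  assumes "hs_inner d N A A = 0" "supp d N A"
  shows "A = 0"
proof (rule ext, rule ext)
  fix s t
  show "A s t = 0 s t"
  proof (cases "s \<in> cfg d {1..N} \<and> t \<in> cfg d {1..N}")
    case True then show ?thesis using hs_self_zero[OF assms(1), of s t] by simp
  next
    case False then show ?thesis using assms(2) unfolding supp_def by auto
  qed
qed




lemma gram_schmidt:
  "finite B \<Longrightarrow> \<exists>k\<in>V.span B. \<forall>z\<in>V.span B. hs_inner d N z (w - k) = 0"
proof (induction B arbitrary: w rule: finite_induct)
  case empty
  show ?case by (rule bexI[of _ 0]) (auto simp: hs_inner_def V.span_empty V.span_zero)
next
  case (insert b B)
  obtain k1 where k1: "k1 \<in> V.span B" "\<forall>z\<in>V.span B. hs_inner d N z (w - k1) = 0"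
    using insert.IH by blast
  obtain kb where kb: "kb \<in> V.span B" "\<forall>z\<in>V.span B. hs_inner d N z (b - kb) = 0"
    using insert.IH by blast
  define b' where "b' = b - kb"
  have decomp: "\<exists>c z'. z = cscale c b' + z' \<and> z' \<in> V.span B" if hz: "z \<in> V.span (insert b B)" for z
  proof -
    from hz obtain c where c: "z - cscale c b \<in> V.span B" using V.span_breakdown_eq by blast
    have "z = cscale c b' + (z - cscale c b + cscale c kb)"
      by (simp add: b'_def V.scale_right_diff_distrib)
    moreover have "z - cscale c b + cscale c kb \<in> V.span B"
      using c kb(1) by (intro V.span_add V.span_scale)
    ultimately show ?thesis by blast
  qed
  have sub: "V.span B \<subseteq> V.span (insert b B)" by (rule V.span_mono) auto
  have bin: "b \<in> V.span (insert b B)" by (rule V.span_base) auto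
  have b'B: "\<forall>z\<in>V.span B. hs_inner d N z b' = 0" using kb by (simp add: b'_def)
  show ?case
  proof (cases "hs_inner d N b' b' = 0")
    case True
    show ?thesis
    proof (rule bexI[of _ k1])
      show "k1 \<in> V.span (insert b B)" using k1 sub by auto
      show "\<forall>z\<in>V.span (insert b B). hs_inner d N z (w - k1) = 0"
      proof
        fix z assume "z \<in> V.span (insert b B)"
        then obtain c z' where z: "z = cscale c b' + z'" "z' \<in> V.span B" using decomp by blast
        show "hs_inner d N z (w - k1) = 0"
          using z k1 hs_self_zero_inner[OF True] by (simp add: hs_add1 hs_scale1)
      qed
    qed
  next
    case False
    define \<alpha> where "\<alpha> = hs_inner d N b' (w - k1) / hs_inner d N b' b'"
    show ?thesis
    proof (rule bexI[of _ "k1 + cscale \<alpha> b'"])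
      show "k1 + cscale \<alpha> b' \<in> V.span (insert b B)"
        using k1 kb sub bin unfolding b'_def by (intro V.span_add V.span_scale V.span_diff) auto
      show "\<forall>z\<in>V.span (insert b B). hs_inner d N z (w - (k1 + cscale \<alpha> b')) = 0"
      proof
        fix z assume "z \<in> V.span (insert b B)"
        then obtain c z' where z: "z = cscale c b' + z'" "z' \<in> V.span B" using decomp by blast
        have e: "w - (k1 + cscale \<alpha> b') = (w - k1) - cscale \<alpha> b'" by (simp add: algebra_simps)
        have 1: "hs_inner d N z' (w - k1) = 0" using k1 z by auto
        have 2: "hs_inner d N z' b' = 0" using b'B z by auto
        have 3: "hs_inner d N b' (w - k1) - \<alpha> * hs_inner d N b' b' = 0" using False by (simp add: \<alpha>_def)
        have "hs_inner d N z (w - (k1 + cscale \<alpha> b')) =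
           cnj c * (hs_inner d N b' (w - k1) - \<alpha> * hs_inner d N b' b') +
           (hs_inner d N z' (w - k1) - \<alpha> * hs_inner d N z' b')"
          unfolding e z(1) by (simp add: hs_add1 hs_add2 hs_scale1 hs_diff2 hs_scale2 algebra_simps)
        then show "hs_inner d N z (w - (k1 + cscale \<alpha> b')) = 0" by (simp add: 1 2 3)
      qed
    qed
  qed
qed

lemma Emap_zero: "Emap d N Ob I 0 = 0"
  using Emap_diff[of d N Ob I 0 0] by simp

lemma Epinv_prop:
  assumes "J \<subseteq> {1..N}" "w0 \<in> Vsp d N J"
  shows "Epinv d N Ob I J (Emap d N Ob I w0) \<in> Vsp d N J \<and>
         Emap d N Ob I (Epinv d N Ob I J (Emap d N Ob I w0)) = Emap d N Ob I w0"
proof -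
  let ?E = "Emap d N Ob I"
  let ?W = "Vsp d N J"
  let ?y = "?E w0"
  define P where "P x \<longleftrightarrow> x \<in> ?W
      \<and> (\<forall>z\<in>?W. ?E z = 0 \<longrightarrow> hs_inner d N z x = 0)
      \<and> (\<forall>z\<in>?W. hs_inner d N (?E z) (?E x - ?y) = 0)" for x
  have Wsub: "V.subspace ?W" by (rule Vsp_subspace)
  define K where "K = {z\<in>?W. ?E z = 0}"
  have Ksub: "V.subspace K"
    unfolding V.subspace_def
  proof (intro conjI ballI allI)
    show "0 \<in> K" unfolding K_def using V.subspace_0[OF Wsub] by (simp add: Emap_zero)
    fix x y assume "x \<in> K" "y \<in> K"
    then show "x + y \<in> K" unfolding K_def using V.subspace_add[OF Wsub] by (simp add: Emap_add)
  next
    fix c x assume "x \<in> K"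
    then show "cscale c x \<in> K" unfolding K_def using V.subspace_scale[OF Wsub]
      by (simp add: Emap_scale V.scale_zero_right)
  qed
  obtain B where B: "B \<subseteq> K" "V.independent B" "K \<subseteq> V.span B" "card B = V.dim K"
    by (rule V.basis_exists)
  have BD: "B \<subseteq> V.span (Dset d N)"
    using B(1) by (auto simp: K_def intro: supp_span supp_Vsp)
  have finB: "finite B" using V.independent_span_bound[OF finite_Dset B(2) BD] by blast
  obtain k where k: "k \<in> V.span B" "\<forall>z\<in>V.span B. hs_inner d N z (w0 - k) = 0"
    using gram_schmidt[OF finB] by blast
  have spanK: "V.span B \<subseteq> K" by (rule V.span_minimal[OF B(1) Ksub])
  have kK: "k \<in> K" using k(1) spanK by blast
  define x0 where "x0 = w0 - k"
  have x0W: "x0 \<in> ?W" unfolding x0_def using kK assms(2) Wsub by (auto simp: K_def intro: V.subspace_diff)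
  have Ex0: "?E x0 = ?y" unfolding x0_def using kK by (simp add: Emap_diff K_def)
  have Px0: "P x0"
    unfolding P_def using x0W Ex0 k(2) B(3) by (auto simp: K_def x0_def hs_zero2)
  have uniq: "x1 = x2" if P1: "P x1" and P2: "P x2" for x1 x2
  proof -
    let ?e = "x1 - x2"
    have eW: "?e \<in> ?W" using P1 P2 Wsub unfolding P_def by (auto intro: V.subspace_diff)
    have "hs_inner d N (?E ?e) (?E x1 - ?y) = 0" "hs_inner d N (?E ?e) (?E x2 - ?y) = 0"
      using P1 P2 eW unfolding P_def by auto
    then have "hs_inner d N (?E ?e) ((?E x1 - ?y) - (?E x2 - ?y)) = 0" by (simp add: hs_diff2)
    then have "hs_inner d N (?E ?e) (?E ?e) = 0" by (simp add: Emap_diff)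
    then have Ee: "?E ?e = 0" using hs_self_zero_supp supp_Emap by blast
    have "hs_inner d N ?e x1 = 0" "hs_inner d N ?e x2 = 0" using P1 P2 eW Ee unfolding P_def by auto
    then have "hs_inner d N ?e ?e = 0" by (simp add: hs_diff2)
    moreover have "supp d N ?e" using P1 P2 unfolding P_def by (auto intro: supp_diff supp_Vsp)
    ultimately have "?e = 0" using hs_self_zero_supp by blast
    then show ?thesis by simp
  qed
  have "Epinv d N Ob I J ?y = (THE x. P x)" unfolding Epinv_def P_def ..
  also have "(THE x. P x) = x0" using Px0 uniq by (intro the_equality) auto
  finally show ?thesis using x0W Ex0 by simp
qed




lemma dim_lemma:
  assumes T: "Vector_Spaces.linear cscale cscale T"
    and M: "V.subspace M" and MR: "M \<subseteq> R"
    and RD: "R \<subseteq> V.span D" and D: "finite D"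
    and eq: "V.dim (T ` M) = V.dim R"
  shows "M = R \<and> inj_on T R"
proof -
  interpret L: Vector_Spaces.linear cscale cscale T by (rule T)
  obtain B where B: "B \<subseteq> M" "V.independent B" "M \<subseteq> V.span B" "card B = V.dim M"
    by (rule V.basis_exists)
  obtain C where C: "C \<subseteq> R" "V.independent C" "R \<subseteq> V.span C" "card C = V.dim R"
    by (rule V.basis_exists)
  have finB: "finite B" using V.independent_span_bound[OF D B(2)] B(1) MR RD by blast
  have finC: "finite C" using V.independent_span_bound[OF D C(2)] C(1) RD by blast
  have spanB: "V.span B = M" by (rule V.span_subspace[OF B(1) B(3) M])
  have dMR: "card B \<le> card C" using V.independent_span_bound[OF finC B(2)] B(1) MR C(3) by blast
  obtain B' where B': "B' \<subseteq> T ` B" "V.independent B'" "T ` B \<subseteq> V.span B'" "card B' = V.dim (T ` B)"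
    by (rule V.basis_exists)
  have finTB: "finite (T ` B)" using finB by simp
  have TM: "T ` M \<subseteq> V.span B'"
  proof -
    have "T ` M = V.span (T ` B)" using L.span_image spanB by simp
    also have "\<dots> \<subseteq> V.span B'" using V.span_minimal[OF B'(3) V.subspace_span] .
    finally show ?thesis .
  qed
  have finB': "finite B'" using finTB B'(1) finite_subset by blast
  have "V.dim (T ` M) \<le> card B'" by (rule V.dim_le_card[OF TM finB'])
  moreover have "card B' \<le> card (T ` B)" by (rule card_mono[OF finTB B'(1)])
  moreover have "card (T ` B) \<le> card B" by (rule card_image_le[OF finB])
  ultimately have c1: "card B' = card (T ` B)" and c2: "card (T ` B) = card B" and c3: "card B = card C"
    using eq C(4) dMR by linarith+
  have "B' = T ` B" using card_subset_eq[OF finTB B'(1) c1] .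
  then have indTB: "V.independent (T ` B)" using B'(2) by simp
  have injB: "inj_on T B" using eq_card_imp_inj_on[OF finB c2] .
  have injM: "inj_on T M" using L.inj_on_span_independent_image[OF indTB injB] spanB by simp
  have "R \<subseteq> M"
  proof
    fix x assume xR: "x \<in> R"
    show "x \<in> M"
    proof (rule ccontr)
      assume xM: "x \<notin> M"
      then have "x \<notin> V.span B" using spanB by simp
      then have ind: "V.independent (insert x B)" using V.independent_insertI B(2) by blast
      have "insert x B \<subseteq> V.span C" using xR B(1) MR C(3) by blast
      then have "card (insert x B) \<le> card C" using V.independent_span_bound[OF finC ind] by blast
      moreover have "x \<notin> B" using xM B(1) by blast
      then have "card (insert x B) = card B + 1" using finB by simp
      ultimately show False using c3 by simp
    qed
  qed
  then have "M = R" using MR by blast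
  then show ?thesis using injM by simp
qed

lemma opid_Vsp: "opid d N \<in> Vsp d N {}"
  unfolding opid_def Vsp_def by (rule rangeI)

theorem mainTheorem2:
  fixes d N l r :: nat and Ob :: op and X Y :: "nat \<Rightarrow> op"
  assumes "0 < d" and "N \<ge> 4" and "1 \<le> l" and "1 \<le> r"
    and "2 \<le> l + r" and "l + r \<le> N - 2"
    and "Ob \<in> Vsp d N {1..N}"
    and "lr_invertible d N Ob l r"
    and "\<forall>i\<in>{1..N}. X i \<in> Vsp d N {i}"
    and "Y (N - r) = foldr (opmult d N) (map X [N-r+1..<N+1]) (opid d N)"
    and "\<forall>k. l + 1 \<le> k \<and> k \<le> N - r \<longrightarrow>
           Y (k - 1) = Epinv d N Ob {k-l..k-1} {k..k+r-1}
                         (Emap d N Ob {k-l..k-1} (opmult d N (X k) (Y k)))"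
  shows "\<forall>k. l + 1 \<le> k \<and> k \<le> N - r \<longrightarrow>
           Emap d N Ob {1..k-1} (Y (k - 1)) = Emap d N Ob {1..k-1} (opmult d N (X k) (Y k))
         \<and> inj_on (ptr d N {1..k-l-1}) (Emap d N Ob {1..k-1} ` Vsp d N {k..k+r})"
proof -
  define P where "P k \<longleftrightarrow> Y k \<in> Vsp d N {k+1..N}" for k
  have d0: "0 < d" by (rule assms(1))
  have Xin: "X i \<in> Vsp d N {i..N}" if "1 \<le> i" "i \<le> N" for i
    by (rule Vsp_mono[OF d0 _ _ assms(9)[rule_format, of i]]) (use that in auto)
  have fold: "foldr (opmult d N) (map X [m..<N+1]) (opid d N) \<in> Vsp d N {m..N}"
    if "1 \<le> m" "m \<le> N+1" for m
    using that
  proof (induction "N + 1 - m" arbitrary: m)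
    case 0
    then have "m = N + 1" by simp
    then show ?case using opid_Vsp[of d N] by simp
  next
    case (Suc j)
    then have mN: "m \<le> N" by simp
    have IH: "foldr (opmult d N) (map X [m+1..<N+1]) (opid d N) \<in> Vsp d N {m+1..N}"
      by (rule Suc.hyps(1)) (use Suc.hyps(2) mN in simp_all)
    have IH': "foldr (opmult d N) (map X [m+1..<N+1]) (opid d N) \<in> Vsp d N {m..N}"
      by (rule Vsp_mono[OF d0 _ _ IH]) (use Suc.prems in auto)
    have "[m..<N+1] = m # [m+1..<N+1]" using mN by (simp add: upt_conv_Cons)
    then have "foldr (opmult d N) (map X [m..<N+1]) (opid d N) =
       opmult d N (X m) (foldr (opmult d N) (map X [m+1..<N+1]) (opid d N))" by simp
    moreover have mK: "{m..N} \<subseteq> {1..N}" using Suc.prems by auto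
    ultimately show ?case using Vsp_mult[OF d0 mK Xin[OF Suc.prems(1) mN] IH'] by simp
  qed
  have step: "P (k-1) \<and> Emap d N Ob {1..k-1} (Y (k - 1)) = Emap d N Ob {1..k-1} (opmult d N (X k) (Y k))
         \<and> inj_on (ptr d N {1..k-l-1}) (Emap d N Ob {1..k-1} ` Vsp d N {k..k+r})"
    if k: "l+1 \<le> k" "k \<le> N - r" and Pk: "P k" for k
  proof -
    have kN: "k + r \<le> N" using k assms(2-6) by arith
    let ?E1 = "Emap d N Ob {1..k-1}"
    let ?Es = "Emap d N Ob {k-l..k-1}"
    let ?T = "ptr d N {1..k-l-1}"
    let ?W = "Vsp d N {k..k+r-1}"
    let ?R = "?E1 ` Vsp d N {k..N}"
    let ?M = "?E1 ` ?W"
    have comp: "?Es Z = ?T (?E1 Z)" for Z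
    proof -
      have s1: "{k-l..k-1} \<subseteq> {1..k-1}" using k by auto
      have s2: "{1..k-1} \<subseteq> {1..N}" using kN by auto
      have "{1..k-1} - {k-l..k-1} = {1..k-l-1}" using k by auto
      then show ?thesis using Emap_comp[OF s1 s2] by metis
    qed
    have rank: "V.dim (?Es ` ?W) = V.dim ?R"
    proof -
      have "l \<le> k-1 \<and> (k-1) + r + 1 \<le> N" using k kN by arith
      then have "Erank d N Ob {(k-1)-l+1..k-1} {(k-1)+1..(k-1)+r} = Erank d N Ob {1..k-1} {(k-1)+1..N}"
        using assms(8) unfolding lr_invertible_def by blast
      moreover have "(k-1)-l+1 = k-l" "(k-1)+1 = k" "(k-1)+r = k+r-1" using k by arith+
      ultimately show ?thesis unfolding Erank_def by simp
    qed
    interpret E1: Vector_Spaces.linear cscale cscale ?E1 by (rule linear_Emap)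
    have EsW: "?Es ` ?W = ?T ` ?M" using comp by (auto simp: image_image)
    have WkN: "?W \<subseteq> Vsp d N {k..N}"
    proof
      fix x assume x: "x \<in> ?W"
      have sub: "{k..k+r-1} \<subseteq> {k..N}" using kN by auto
      show "x \<in> Vsp d N {k..N}" by (rule Vsp_mono[OF d0 _ sub x]) (use k in auto)
    qed
    have MR: "?M \<subseteq> ?R" using WkN by blast
    have Msub: "V.subspace ?M" by (rule E1.subspace_image[OF Vsp_subspace])
    have RD: "?R \<subseteq> V.span (Dset d N)" using supp_Emap supp_span by blast
    have dimeq: "V.dim (?T ` ?M) = V.dim ?R" using rank EsW by simp
    from dim_lemma[OF linear_ptr Msub MR RD finite_Dset dimeq]
    have MeqR: "?M = ?R" and inj: "inj_on ?T ?R" by auto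
    have "Vsp d N {k..k+r} \<subseteq> Vsp d N {k..N}"
    proof
      fix x assume x: "x \<in> Vsp d N {k..k+r}"
      have sub: "{k..k+r} \<subseteq> {k..N}" using kN by auto
      show "x \<in> Vsp d N {k..N}" by (rule Vsp_mono[OF d0 _ sub x]) (use k in auto)
    qed
    then have inj2: "inj_on ?T (?E1 ` Vsp d N {k..k+r})" using inj_on_subset[OF inj] by blast
    let ?w = "opmult d N (X k) (Y k)"
    have kk: "1 \<le> k" "k \<le> N" using k kN by auto
    have Yk: "Y k \<in> Vsp d N {k..N}" by (rule Vsp_mono[OF d0 _ _ Pk[unfolded P_def]]) (use kk in auto)
    have kK: "{k..N} \<subseteq> {1..N}" using kk by auto
    have wV: "?w \<in> Vsp d N {k..N}" by (rule Vsp_mult[OF d0 kK Xin[OF kk] Yk])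
    have "?E1 ?w \<in> ?R" by (rule imageI[OF wV])
    then have "?E1 ?w \<in> ?M" by (simp only: MeqR)
    then obtain w0 where w0': "?E1 ?w = ?E1 w0" "w0 \<in> ?W" by (rule imageE)
    then have w0: "w0 \<in> ?W" "?E1 w0 = ?E1 ?w" by simp_all
    have Esw: "?Es ?w = ?Es w0" using comp w0(2) by simp
    have Yk1: "Y (k-1) = Epinv d N Ob {k-l..k-1} {k..k+r-1} (?Es ?w)" using assms(11) k by blast
    have sW: "{k..k+r-1} \<subseteq> {1..N}" using kk kN by auto
    have YW: "Y (k-1) \<in> ?W" and EsY: "?Es (Y (k-1)) = ?Es w0"
      using Epinv_prop[OF sW w0(1), of Ob "{k-l..k-1}"] unfolding Yk1 Esw by auto
    have "?T (?E1 (Y (k-1))) = ?T (?E1 ?w)" using comp EsY Esw by metis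
    moreover have "?E1 (Y (k-1)) \<in> ?R"
    proof -
      have "?E1 (Y (k-1)) \<in> ?M" by (rule imageI[OF YW])
      then show ?thesis by (simp only: MeqR)
    qed
    moreover have "?E1 ?w \<in> ?R" by (rule imageI[OF wV])
    ultimately have part1: "?E1 (Y (k-1)) = ?E1 ?w" using inj by (meson inj_onD)
    have "k - 1 + 1 = k" using kk by simp
    then have "P (k-1)" using YW WkN unfolding P_def by auto
    then show ?thesis using part1 inj2 by blast
  qed
  have Pall: "l + j \<le> N - r \<longrightarrow> P (N - r - j)" for j
  proof (induction j)
    case 0
    have "Y (N - r) \<in> Vsp d N {N-r+1..N}" using fold[of "N-r+1"] assms(10) by simp
    then show ?case unfolding P_def by simp
  next
    case (Suc j)
    show ?case
    proof
      assume h: "l + Suc j \<le> N - r"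
      then have "P (N - r - j)" using Suc by simp
      then have "P (N - r - j - 1)" using step[of "N - r - j"] h by auto
      moreover have "N - r - j - 1 = N - r - Suc j" by simp
      ultimately show "P (N - r - Suc j)" by simp
    qed
  qed
  show ?thesis
  proof (intro allI impI)
    fix k assume k: "l + 1 \<le> k \<and> k \<le> N - r"
    have e1: "l + (N - r - k) \<le> N - r" using k by arith
    have e2: "N - r - (N - r - k) = k" using k by arith
    have "P (N - r - (N - r - k))" using Pall[of "N - r - k"] e1 by blast
    then have "P k" using e2 by metis
    then show "Emap d N Ob {1..k-1} (Y (k - 1)) = Emap d N Ob {1..k-1} (opmult d N (X k) (Y k))
         \<and> inj_on (ptr d N {1..k-l-1}) (Emap d N Ob {1..k-1} ` Vsp d N {k..k+r})"
      using step[of k] k by blast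
  qed
qed


end
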